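(* Let $\mathcal Z,\mathcal S,\mathcal U$ be finite alphabets and let $p_{ZS}$, $p_{SU}$ be joint types of length-$n$ sequences on $\mathcal Z\times\mathcal S$ and $\mathcal S\times\mathcal U$ having the same $S$-marginal $p_S$. Define the pmf $P^\star_{ZSU}(z,s,u)=p_{Z|S}(z|s)p_{SU}(s,u)$, where $p_{Z|S}(z|s)=p_{ZS}(z,s)/p_S(s)$ when $p_S(s)>0$ (and $P^\star_{ZSU}(z,s,u)=0$ when $p_S(s)=0$). Let $$\mathcal A=\Big\{p_{Z_1S_1U_1}\in\mathcal P_n(\mathcal Z\times\mathcal S\times\mathcal U):\ p_{Z_1S_1}=p_{ZS},\ p_{S_1U_1}=p_{SU},\ |p_{Z_1S_1U_1}-P^\star_{ZSU}|_\infty\le\tfrac1n\Big\}.$$ Then $P^\star_{ZSU}$ belongs to the convex hull of $\mathcal A$.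
   Context: $\mathcal P_n(\mathcal Z\times\mathcal S\times\mathcal U)$ is the set of joint types of length-$n$ sequences, i.e., pmfs all of whose entries are integer multiples of $1/n$; $p_{Z_1S_1}$, $p_{S_1U_1}$ are marginals of $p_{Z_1S_1U_1}$; $|P-Q|_\infty=\max|P(\cdot)-Q(\cdot)|$. The convex hull of a finite set of vectors is the set of all their convex combinations. *)

theory Defs
  imports "HOL-Analysis.Analysis"
begin

definition is_pmf :: "real ^ ('a::finite) \<Rightarrow> bool" where
  "is_pmf P \<longleftrightarrow> (\<forall>x. P $ x \<ge> 0) \<and> (\<Sum>x\<in>UNIV. P $ x) = 1"

definition types :: "nat \<Rightarrow> (real ^ ('a::finite)) set" where
  "types n = {P. is_pmf P \<and> (\<forall>x. \<exists>k::nat. P $ x = real k / real n)}"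

definition marg_ZS :: "real ^ ('z::finite \<times> 's::finite \<times> 'u::finite) \<Rightarrow> real ^ ('z \<times> 's)" where
  "marg_ZS P = (\<chi> p. case p of (z,s) \<Rightarrow> \<Sum>u\<in>UNIV. P $ (z,s,u))"

definition marg_SU :: "real ^ ('z::finite \<times> 's::finite \<times> 'u::finite) \<Rightarrow> real ^ ('s \<times> 'u)" where
  "marg_SU P = (\<chi> p. case p of (s,u) \<Rightarrow> \<Sum>z\<in>UNIV. P $ (z,s,u))"

definition marg_S_of_ZS :: "real ^ ('z::finite \<times> 's::finite) \<Rightarrow> real ^ 's" where
  "marg_S_of_ZS P = (\<chi> s. \<Sum>z\<in>UNIV. P $ (z,s))"

definition marg_S_of_SU :: "real ^ ('s::finite \<times> 'u::finite) \<Rightarrow> real ^ 's" where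
  "marg_S_of_SU P = (\<chi> s. \<Sum>u\<in>UNIV. P $ (s,u))"

definition Pstar :: "real ^ ('z::finite \<times> 's::finite) \<Rightarrow> real ^ ('s \<times> 'u::finite)
    \<Rightarrow> real ^ ('z \<times> 's \<times> 'u)" where
  "Pstar pZS pSU = (\<chi> p. case p of (z,s,u) \<Rightarrow> if marg_S_of_ZS pZS $ s > 0
      then pZS $ (z,s) / marg_S_of_ZS pZS $ s * pSU $ (s,u) else 0)"

definition dist_inf :: "real ^ ('a::finite) \<Rightarrow> real ^ 'a \<Rightarrow> real" where
  "dist_inf P Q = Max (range (\<lambda>x. \<bar>P $ x - Q $ x\<bar>))"

end

theory Submission
  imports Defs
begin

definition fsum :: "('e::finite \<Rightarrow> 'k) \<Rightarrow> real^'e \<Rightarrow> 'k \<Rightarrow> real" where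
  "fsum r Y i = (\<Sum>e\<in>{e. r e = i}. Y$e)"

lemma fsum_total:
  fixes r :: "'e::finite \<Rightarrow> 'k::finite"
  shows "(\<Sum>i\<in>UNIV. fsum r Y i) = (\<Sum>e\<in>UNIV. Y$e)"
  unfolding fsum_def using sum.group[of "UNIV::'e set" "UNIV::'k set" r "\<lambda>e. Y$e"] by simp

lemma fsum_lin: "fsum r (Y + t *\<^sub>R D) i = fsum r Y i + t * fsum r D i"
  by (simp add: fsum_def sum.distrib sum_distrib_left)

lemma kernel_exists:
  fixes F :: "'e::finite set" and r :: "'e \<Rightarrow> 'r::finite" and c :: "'e \<Rightarrow> 'c::finite"
  assumes ne: "F \<noteq> {}" and hr: "\<forall>e\<in>F. \<exists>e'\<in>F. e' \<noteq> e \<and> r e' = r e"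
    and hc: "\<forall>e\<in>F. \<exists>e'\<in>F. e' \<noteq> e \<and> c e' = c e"
  shows "\<exists>D::real^'e. D \<noteq> 0 \<and> (\<forall>e. e \<notin> F \<longrightarrow> D$e = 0) \<and> (\<forall>i. fsum r D i = 0) \<and> (\<forall>j. fsum c D j = 0)"
proof (rule ccontr)
  assume nt: "\<not> ?thesis"
  obtain c0 where c0: "c0 \<in> c ` F" using ne by auto
  define V where "V = {x::real^'e. \<forall>e. e \<notin> F \<longrightarrow> x$e = 0}"
  define L where "L x = ((\<chi> k. case k of Inl i \<Rightarrow> fsum r x i | Inr j \<Rightarrow> if j = c0 then 0 else fsum c x j) :: real^('r+'c))" for x
  define K where "K = Inl ` (r ` F) \<union> Inr ` (c ` F - {c0})"
  have lin: "linear L"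
    by (rule linearI) (auto simp: L_def vec_eq_iff fsum_def sum.distrib sum_distrib_left split: sum.split)
  have subV: "subspace V" unfolding subspace_def V_def by auto
  have spanV: "span V = V" using subV by (simp add: span_eq_iff)
  have LV: "L ` V \<subseteq> {y. \<forall>k. k \<notin> K \<longrightarrow> y$k = 0}"
  proof safe
    fix x k assume x: "x \<in> V" and k: "k \<notin> K"
    show "L x $ k = 0"
    proof (cases k)
      case (Inl i)
      then have "i \<notin> r ` F" using k K_def by auto
      then have "\<forall>e\<in>{e. r e = i}. x$e = 0" using x V_def by auto
      then show ?thesis using Inl by (simp add: L_def fsum_def)
    next
      case (Inr j)
      show ?thesis
      proof (cases "j = c0")
        case True then show ?thesis using Inr by (simp add: L_def)
      next
        case False
        then have "j \<notin> c ` F" using k K_def Inr by auto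
        then have "\<forall>e\<in>{e. c e = j}. x$e = 0" using x V_def by auto
        then show ?thesis using Inr False by (simp add: L_def fsum_def)
      qed
    qed
  qed
  have inj: "inj_on L (span V)"
    unfolding spanV
  proof (rule inj_onI)
    fix x y assume x: "x \<in> V" and y: "y \<in> V" and eq: "L x = L y"
    define d where "d = x - y"
    have dV: "\<forall>e. e \<notin> F \<longrightarrow> d$e = 0" using x y by (simp add: V_def d_def)
    have Ld: "L d = 0" using eq lin by (simp add: d_def linear_diff)
    have rz: "\<forall>i. fsum r d i = 0"
    proof
      fix i show "fsum r d i = 0" using arg_cong[OF Ld, of "\<lambda>v. v $ Inl i"] by (simp add: L_def)
    qed
    have cz: "\<forall>j. j \<noteq> c0 \<longrightarrow> fsum c d j = 0"
    proof safe
      fix j assume "j \<noteq> c0" then show "fsum c d j = 0" using arg_cong[OF Ld, of "\<lambda>v. v $ Inr j"] by (simp add: L_def)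
    qed
    have "(\<Sum>j\<in>UNIV. fsum c d j) = (\<Sum>i\<in>UNIV. fsum r d i)" by (simp add: fsum_total)
    also have "\<dots> = 0" using rz by simp
    finally have s0: "(\<Sum>j\<in>UNIV. fsum c d j) = 0" .
    have "(\<Sum>j\<in>UNIV. fsum c d j) = fsum c d c0 + (\<Sum>j\<in>UNIV-{c0}. fsum c d j)"
      by (simp add: sum.remove)
    also have "(\<Sum>j\<in>UNIV-{c0}. fsum c d j) = 0" using cz by (intro sum.neutral) auto
    finally have "fsum c d c0 = 0" using s0 by simp
    then have "\<forall>j. fsum c d j = 0" using cz by metis
    then have "d = 0" using nt dV rz by blast
    then show "x = y" by (simp add: d_def)
  qed
  have dimV: "dim V = card F"
    unfolding V_def dim_vec_eq[symmetric] by (rule dim_substandard_cart)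
  have "card F = dim (L ` V)" using dim_image_eq[OF lin inj] dimV by simp
  also have "\<dots> \<le> dim {y::real^('r+'c). \<forall>k. k \<notin> K \<longrightarrow> y$k = 0}" by (rule dim_subset[OF LV])
  also have "\<dots> = card K" unfolding dim_vec_eq[symmetric] by (rule dim_substandard_cart)
  also have "card K = card (r ` F) + card (c ` F - {c0})"
    unfolding K_def by (subst card_Un_disjoint) (auto simp: card_image)
  finally have le: "card F \<le> card (r ` F) + card (c ` F - {c0})" by simp
  have cc: "card (c ` F - {c0}) = card (c ` F) - 1" using c0 by simp
  have cpos: "card (c ` F) \<ge> 1" using c0 ne by (simp add: Suc_le_eq card_gt_0_iff)
  have two: "2 * card (g ` F) \<le> card F" if hg: "\<forall>e\<in>F. \<exists>e'\<in>F. e' \<noteq> e \<and> g e' = g e" for g :: "'e \<Rightarrow> 'x"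
  proof -
    have "\<forall>i\<in>g ` F. 2 \<le> card {e\<in>F. g e = i}"
    proof
      fix i assume "i \<in> g ` F"
      then obtain e where e: "e \<in> F" "g e = i" by auto
      then obtain e' where e': "e' \<in> F" "e' \<noteq> e" "g e' = g e" using hg by blast
      have "{e, e'} \<subseteq> {e\<in>F. g e = i}" using e e' by auto
      then have "card {e, e'} \<le> card {e\<in>F. g e = i}" by (intro card_mono) auto
      then show "2 \<le> card {e\<in>F. g e = i}" using e' by simp
    qed
    then have "(\<Sum>i\<in>g ` F. 2) \<le> (\<Sum>i\<in>g ` F. card {e\<in>F. g e = i})" by (intro sum_mono) auto
    also have "\<dots> = card F"
      using sum.group[of F "g ` F" g "\<lambda>_. 1::nat"] by simp
    finally show ?thesis by simp
  qed
  have "2 * card (r ` F) \<le> card F" using two hr by blast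
  moreover have "2 * card (c ` F) \<le> card F" using two hc by blast
  ultimately show False using le cc cpos by linarith
qed


lemma step_t:
  fixes Y D :: "real^'e::finite"
  assumes D0: "D \<noteq> 0" and DF: "\<forall>e. Y$e \<in> \<int> \<longrightarrow> D$e = 0"
  shows "\<exists>t>0. (\<forall>e. of_int \<lfloor>Y$e\<rfloor> \<le> Y$e + t*D$e \<and> Y$e + t*D$e \<le> of_int \<lceil>Y$e\<rceil>) \<and> (\<exists>e. Y$e \<notin> \<int> \<and> Y$e + t*D$e \<in> \<int>)"
proof -
  define G where "G = {e. D$e \<noteq> 0}"
  define bnd where "bnd e = (if D$e > 0 then (of_int \<lceil>Y$e\<rceil> - Y$e) / D$e else (of_int \<lfloor>Y$e\<rfloor> - Y$e) / D$e)" for e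
  have Gne: "G \<noteq> {}" using D0 by (auto simp: G_def vec_eq_iff)
  have fl: "of_int \<lfloor>Y$e\<rfloor> < Y$e" "Y$e < of_int \<lceil>Y$e\<rceil>" if "e \<in> G" for e
  proof -
    have ni: "Y$e \<notin> \<int>" using that DF G_def by auto
    have "of_int \<lfloor>Y$e\<rfloor> \<noteq> Y$e" using ni by (metis Ints_of_int)
    then show "of_int \<lfloor>Y$e\<rfloor> < Y$e" by (meson floor_correct less_le)
    have "of_int \<lceil>Y$e\<rceil> \<noteq> Y$e" using ni by (metis Ints_of_int)
    then show "Y$e < of_int \<lceil>Y$e\<rceil>" by (metis le_of_int_ceiling less_le)
  qed
  have bpos: "bnd e > 0" if "e \<in> G" for e
  proof (cases "D$e > 0")
    case True then show ?thesis using fl[OF that] by (simp add: bnd_def)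
  next
    case False then have "D$e < 0" using that G_def by auto
    then show ?thesis using fl[OF that] by (simp add: bnd_def divide_neg_neg)
  qed
  define t where "t = Min (bnd ` G)"
  have fin: "finite (bnd ` G)" by simp
  have tin: "t \<in> bnd ` G" unfolding t_def using Gne fin by (intro Min_in) auto
  have tle: "t \<le> bnd e" if "e \<in> G" for e unfolding t_def using fin that by simp
  have tpos: "t > 0" using tin bpos by auto
  have bounds: "of_int \<lfloor>Y$e\<rfloor> \<le> Y$e + t*D$e \<and> Y$e + t*D$e \<le> of_int \<lceil>Y$e\<rceil>" for e
  proof -
    show "of_int \<lfloor>Y$e\<rfloor> \<le> Y$e + t*D$e \<and> Y$e + t*D$e \<le> of_int \<lceil>Y$e\<rceil>"
    proof (cases "e \<in> G")
      case False then show ?thesis by (simp add: G_def ceiling_correct)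
    next
      case True
      note b = tle[OF True]
      show ?thesis
      proof (cases "D$e > 0")
        case pos: True
        have "t * D$e \<le> bnd e * D$e" using b pos by (simp add: mult_right_mono)
        also have "\<dots> = of_int \<lceil>Y$e\<rceil> - Y$e" using pos by (simp add: bnd_def)
        finally have "t * D$e \<le> of_int \<lceil>Y$e\<rceil> - Y$e" .
        moreover have "t*D$e > 0" using pos tpos by simp
        ultimately show ?thesis using fl[OF True] by linarith
      next
        case neg: False
        then have n: "D$e < 0" using True G_def by auto
        have "bnd e * D$e \<le> t * D$e" using b n by (simp add: mult_right_mono_neg)
        moreover have "bnd e * D$e = of_int \<lfloor>Y$e\<rfloor> - Y$e" using n by (simp add: bnd_def)
        moreover have "t * D$e \<le> 0" using n tpos by (simp add: mult_pos_neg less_imp_le)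
        ultimately show ?thesis using fl[OF True] by linarith
      qed
    qed
  qed
  have "\<exists>e. Y$e \<notin> \<int> \<and> Y$e + t*D$e \<in> \<int>"
  proof -
    obtain e where e: "e \<in> G" "t = bnd e" using tin by auto
    have ni: "Y$e \<notin> \<int>" using e DF G_def by auto
    have "Y$e + t*D$e \<in> \<int>"
    proof (cases "D$e > 0")
      case True then show ?thesis using e by (simp add: bnd_def)
    next
      case False then show ?thesis using e G_def by (simp add: bnd_def)
    qed
    then show "\<exists>e. Y$e \<notin> \<int> \<and> Y$e + t*D$e \<in> \<int>" using ni by blast
  qed
  then show ?thesis using bounds tpos by blast
qed

definition Kset :: "('e::finite \<Rightarrow> 'r) \<Rightarrow> ('e \<Rightarrow> 'c) \<Rightarrow> real^'e \<Rightarrow> (real^'e) set" where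
  "Kset r c Y = {X. (\<forall>e. X$e \<in> \<int>) \<and> (\<forall>i. fsum r X i = fsum r Y i) \<and> (\<forall>j. fsum c X j = fsum c Y j)
     \<and> (\<forall>e. of_int \<lfloor>Y$e\<rfloor> \<le> X$e \<and> X$e \<le> of_int \<lceil>Y$e\<rceil>)}"

lemma row_two:
  fixes r :: "'e::finite \<Rightarrow> 'r"
  assumes int: "fsum r Y (r e) \<in> \<int>" and ni: "Y$e \<notin> \<int>"
  shows "\<exists>e'. e' \<noteq> e \<and> r e' = r e \<and> Y$e' \<notin> \<int>"
proof (rule ccontr)
  assume "\<not> ?thesis"
  then have "\<forall>e'\<in>{e'. r e' = r e} - {e}. Y$e' \<in> \<int>" by auto
  then have rest: "(\<Sum>e'\<in>{e'. r e' = r e} - {e}. Y$e') \<in> \<int>" by (intro Ints_sum) auto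
  have "fsum r Y (r e) = Y$e + (\<Sum>e'\<in>{e'. r e' = r e} - {e}. Y$e')"
    unfolding fsum_def by (subst sum.remove[of _ e]) auto
  then have "Y$e = fsum r Y (r e) - (\<Sum>e'\<in>{e'. r e' = r e} - {e}. Y$e')" by simp
  then have "Y$e \<in> \<int>" using int rest by (simp add: Ints_diff)
  then show False using ni by simp
qed

lemma rounding:
  fixes r :: "'e::finite \<Rightarrow> 'r::finite" and c :: "'e \<Rightarrow> 'c::finite"
  shows "(\<forall>i. fsum r Y i \<in> \<int>) \<Longrightarrow> (\<forall>j. fsum c Y j \<in> \<int>) \<Longrightarrow> Y \<in> convex hull (Kset r c Y)"
proof (induction "card {e. Y$e \<notin> \<int>}" arbitrary: Y rule: less_induct)
  case less
  define F where "F = {e. Y$e \<notin> \<int>}"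
  show ?case
  proof (cases "F = {}")
    case True
    then have "Y \<in> Kset r c Y" unfolding Kset_def F_def
      by (auto elim!: Ints_cases)
    then show ?thesis by (rule hull_inc)
  next
    case Fne: False
    have hr: "\<forall>e\<in>F. \<exists>e'\<in>F. e' \<noteq> e \<and> r e' = r e"
      using row_two[of r Y] less.prems(1) unfolding F_def by blast
    have hc: "\<forall>e\<in>F. \<exists>e'\<in>F. e' \<noteq> e \<and> c e' = c e"
      using row_two[of c Y] less.prems(2) unfolding F_def by blast
    obtain D :: "real^'e" where D: "D \<noteq> 0" "\<forall>e. e \<notin> F \<longrightarrow> D$e = 0" "\<forall>i. fsum r D i = 0" "\<forall>j. fsum c D j = 0"
      using kernel_exists[OF Fne hr hc] by blast
    have DF: "\<forall>e. Y$e \<in> \<int> \<longrightarrow> D$e = 0" using D(2) F_def by auto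
    have key: "Y + t *\<^sub>R E \<in> convex hull (Kset r c Y)"
      if t: "t > 0" and Eb: "\<forall>e. of_int \<lfloor>Y$e\<rfloor> \<le> Y$e + t*E$e \<and> Y$e + t*E$e \<le> of_int \<lceil>Y$e\<rceil>"
        and Ee: "\<exists>e. Y$e \<notin> \<int> \<and> Y$e + t*E$e \<in> \<int>"
        and EF: "\<forall>e. Y$e \<in> \<int> \<longrightarrow> E$e = 0"
        and Er: "\<forall>i. fsum r E i = 0" and Ec: "\<forall>j. fsum c E j = 0" for t E
    proof -
      define Y1 where "Y1 = Y + t *\<^sub>R E"
      have Y1e: "Y1$e = Y$e + t*E$e" for e by (simp add: Y1_def)
      have r1: "fsum r Y1 i = fsum r Y i" for i using Er by (simp add: Y1_def fsum_lin)
      have c1: "fsum c Y1 j = fsum c Y j" for j using Ec by (simp add: Y1_def fsum_lin)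
      obtain e0 where e0: "Y$e0 \<notin> \<int>" "Y1$e0 \<in> \<int>" using Ee Y1e by auto
      have sub: "{e. Y1$e \<notin> \<int>} \<subset> {e. Y$e \<notin> \<int>}"
      proof
        show "{e. Y1$e \<notin> \<int>} \<subseteq> {e. Y$e \<notin> \<int>}" using EF Y1e by auto
        show "{e. Y1$e \<notin> \<int>} \<noteq> {e. Y$e \<notin> \<int>}" using e0 by auto
      qed
      have lt: "card {e. Y1$e \<notin> \<int>} < card {e. Y$e \<notin> \<int>}"
        by (rule psubset_card_mono[OF _ sub]) simp
      have "Y1 \<in> convex hull (Kset r c Y1)"
        using less.hyps[OF lt] less.prems r1 c1 by simp
      moreover have "Kset r c Y1 \<subseteq> Kset r c Y"
      proof
        fix X assume X: "X \<in> Kset r c Y1"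
        have "of_int \<lfloor>Y$e\<rfloor> \<le> X$e \<and> X$e \<le> of_int \<lceil>Y$e\<rceil>" for e
        proof -
          have a: "\<lfloor>Y$e\<rfloor> \<le> \<lfloor>Y1$e\<rfloor>" using Eb Y1e by (simp add: le_floor_iff)
          have b: "\<lceil>Y1$e\<rceil> \<le> \<lceil>Y$e\<rceil>" using Eb Y1e by (simp add: ceiling_le_iff)
          have "of_int \<lfloor>Y1$e\<rfloor> \<le> X$e \<and> X$e \<le> of_int \<lceil>Y1$e\<rceil>" using X by (simp add: Kset_def)
          moreover have "(of_int \<lfloor>Y$e\<rfloor>::real) \<le> of_int \<lfloor>Y1$e\<rfloor>" using a by simp
          moreover have "(of_int \<lceil>Y1$e\<rceil>::real) \<le> of_int \<lceil>Y$e\<rceil>" using b by simp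
          ultimately show ?thesis by linarith
        qed
        then show "X \<in> Kset r c Y" using X r1 c1 by (simp add: Kset_def)
      qed
      ultimately show ?thesis unfolding Y1_def by (meson hull_mono subsetD)
    qed
    obtain t2 where t2: "t2 > 0" "\<forall>e. of_int \<lfloor>Y$e\<rfloor> \<le> Y$e + t2*D$e \<and> Y$e + t2*D$e \<le> of_int \<lceil>Y$e\<rceil>"
      "\<exists>e. Y$e \<notin> \<int> \<and> Y$e + t2*D$e \<in> \<int>"
      using step_t[OF D(1) DF] by blast
    have mD0: "-D \<noteq> 0" using D(1) by simp
    have mDF: "\<forall>e. Y$e \<in> \<int> \<longrightarrow> (-D)$e = 0" using DF by simp
    obtain t1 where t1: "t1 > 0" "\<forall>e. of_int \<lfloor>Y$e\<rfloor> \<le> Y$e + t1*(-D)$e \<and> Y$e + t1*(-D)$e \<le> of_int \<lceil>Y$e\<rceil>"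
      "\<exists>e. Y$e \<notin> \<int> \<and> Y$e + t1*(-D)$e \<in> \<int>"
      using step_t[OF mD0 mDF] by blast
    have mr: "\<forall>i. fsum r (-D) i = 0" using D(3) by (simp add: fsum_def sum_negf)
    have mc: "\<forall>j. fsum c (-D) j = 0" using D(4) by (simp add: fsum_def sum_negf)
    have h1: "Y + t2 *\<^sub>R D \<in> convex hull (Kset r c Y)"
      using key[OF t2(1) t2(2) t2(3) DF D(3) D(4)] .
    have h2: "Y + t1 *\<^sub>R (-D) \<in> convex hull (Kset r c Y)"
      using key[OF t1(1) t1(2) t1(3) mDF mr mc] .
    define a where "a = t1 / (t1 + t2)"
    define b where "b = t2 / (t1 + t2)"
    have ab: "a \<ge> 0" "b \<ge> 0" "a + b = 1" proof -
      have "t1 + t2 > 0" using t1 t2 by simp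
      then show "a \<ge> 0" "b \<ge> 0" "a + b = 1" using t1 t2
        by (auto simp: a_def b_def add_divide_distrib[symmetric])
    qed
    have "a *\<^sub>R (Y + t2 *\<^sub>R D) + b *\<^sub>R (Y + t1 *\<^sub>R (-D)) = Y"
    proof -
      have ne: "t1 + t2 \<noteq> 0" using t1 t2 by simp
      have abt: "a * t2 = b * t1" by (simp add: a_def b_def)
      have "a * (Y$i + t2*D$i) + b*(Y$i + t1*(-D$i)) = (a+b)*Y$i + (a*t2 - b*t1)*D$i" for i
        by (simp add: algebra_simps)
      then show ?thesis using ab(3) abt by (simp add: vec_eq_iff)
    qed
    moreover have "a *\<^sub>R (Y + t2 *\<^sub>R D) + b *\<^sub>R (Y + t1 *\<^sub>R (-D)) \<in> convex hull (Kset r c Y)"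
      using convexD[OF convex_convex_hull h1 h2 ab] .
    ultimately show ?thesis by simp
  qed
qed


lemma sum_fiber_ZS:
  "(\<Sum>e\<in>{e. (case e of (z',s',u) \<Rightarrow> (z',s')) = (z,s)}. f e) = (\<Sum>u\<in>UNIV. f (z,s,u))"
proof -
  have eq: "{e. (case e of (z',s',u) \<Rightarrow> (z',s')) = (z,s)} = (\<lambda>u. (z,s,u)) ` UNIV" by auto
  have rr: "sum f (range (\<lambda>u. (z,s,u))) = (\<Sum>u\<in>UNIV. f (z,s,u))"
    by (simp add: sum.reindex inj_def)
  show ?thesis unfolding eq by (rule rr)
qed

lemma sum_fiber_SU:
  "(\<Sum>e\<in>{e. (case e of (z',s',u') \<Rightarrow> (s',u')) = (s,u)}. f e) = (\<Sum>z\<in>UNIV. f (z,s,u))"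
proof -
  have eq: "{e. (case e of (z',s',u') \<Rightarrow> (s',u')) = (s,u)} = (\<lambda>z. (z,s,u)) ` UNIV" by auto
  have rr: "sum f (range (\<lambda>z. (z,s,u))) = (\<Sum>z\<in>UNIV. f (z,s,u))"
    by (simp add: sum.reindex inj_def)
  show ?thesis unfolding eq by (rule rr)
qed

theorem lemma8:
  fixes n :: nat
    and pZS :: "real ^ ('z::finite \<times> 's::finite)"
    and pSU :: "real ^ ('s \<times> 'u::finite)"
  assumes "n \<ge> 1"
    and "pZS \<in> types n"
    and "pSU \<in> types n"
    and "marg_S_of_ZS pZS = marg_S_of_SU pSU"
  shows "Pstar pZS pSU \<in> convex hull
    {P \<in> types n. marg_ZS P = pZS \<and> marg_SU P = pSU \<and>
        dist_inf P (Pstar pZS pSU) \<le> 1 / real n}"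
proof -
  define r :: "'z \<times> 's \<times> 'u \<Rightarrow> 'z \<times> 's" where "r = (\<lambda>(z,s,u). (z,s))"
  define c :: "'z \<times> 's \<times> 'u \<Rightarrow> 's \<times> 'u" where "c = (\<lambda>(z,s,u). (s,u))"
  define Ps where "Ps = Pstar pZS pSU"
  define Y where "Y = real n *\<^sub>R Ps"
  define pS where "pS = marg_S_of_ZS pZS"
  have npos: "real n > 0" using assms(1) by simp
  have zs_nn: "\<And>x. pZS $ x \<ge> 0" and zs_sum: "(\<Sum>x\<in>UNIV. pZS $ x) = 1"
    and zs_int: "\<And>x. \<exists>k::nat. pZS $ x = real k / real n"
    using assms(2) by (auto simp: types_def is_pmf_def)
  have su_nn: "\<And>x. pSU $ x \<ge> 0" and su_int: "\<And>x. \<exists>k::nat. pSU $ x = real k / real n"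
    using assms(3) by (auto simp: types_def is_pmf_def)
  have pS1: "pS $ s = (\<Sum>z\<in>UNIV. pZS $ (z,s))" for s by (simp add: pS_def marg_S_of_ZS_def)
  have pS2: "pS $ s = (\<Sum>u\<in>UNIV. pSU $ (s,u))" for s
    using assms(4) by (simp add: pS_def marg_S_of_SU_def)
  have pS_nn: "pS $ s \<ge> 0" for s using pS1 zs_nn by (simp add: sum_nonneg)
  have Ps_e: "Ps $ (z,s,u) = (if pS $ s > 0 then pZS $ (z,s) / pS $ s * pSU $ (s,u) else 0)" for z s u
    by (simp add: Ps_def Pstar_def pS_def)
  have Ps_nn: "Ps $ e \<ge> 0" for e
    using zs_nn su_nn pS_nn by (cases e) (auto simp: Ps_e)
  have rowP: "(\<Sum>u\<in>UNIV. Ps $ (z,s,u)) = pZS $ (z,s)" for z :: 'z and s :: 's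
  proof (cases "pS $ s > 0")
    case True
    have "(\<Sum>u\<in>UNIV. Ps $ (z,s,u)) = pZS $ (z,s) / pS $ s * (\<Sum>u\<in>UNIV. pSU $ (s,u))"
      using True by (simp add: Ps_e sum_distrib_left)
    then show ?thesis using True by (simp add: pS2[symmetric])
  next
    case False
    then have "pS $ s = 0" using pS_nn[of s] by simp
    then have "pZS $ (z,s) = 0" using pS1[of s] zs_nn by (simp add: sum_nonneg_eq_0_iff)
    then show ?thesis using False by (simp add: Ps_e)
  qed
  have colP: "(\<Sum>z\<in>UNIV. Ps $ (z,s,u)) = pSU $ (s,u)" for s :: 's and u :: 'u
  proof (cases "pS $ s > 0")
    case True
    have "(\<Sum>z\<in>UNIV. Ps $ (z,s,u)) = (\<Sum>z\<in>UNIV. pZS $ (z,s)) / pS $ s * pSU $ (s,u)"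
      using True by (simp add: Ps_e sum_distrib_right sum_divide_distrib)
    then show ?thesis using True by (simp add: pS1[symmetric])
  next
    case False
    then have "pS $ s = 0" using pS_nn[of s] by simp
    then have "pSU $ (s,u) = 0" using pS2[of s] su_nn by (simp add: sum_nonneg_eq_0_iff)
    then show ?thesis using False by (simp add: Ps_e)
  qed
  have rowY: "fsum r Y (z,s) = real n * pZS $ (z,s)" for z s
    unfolding fsum_def r_def sum_fiber_ZS using rowP[of z s]
    by (simp add: Y_def sum_distrib_left[symmetric])
  have colY: "fsum c Y (s,u) = real n * pSU $ (s,u)" for s u
    unfolding fsum_def c_def sum_fiber_SU using colP[of s u]
    by (simp add: Y_def sum_distrib_left[symmetric])
  have rint: "\<forall>i. fsum r Y i \<in> \<int>"
  proof
    fix i :: "'z \<times> 's" obtain z s where i: "i = (z,s)" by (cases i)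
    obtain k :: nat where "pZS $ (z,s) = real k / real n" using zs_int by blast
    then show "fsum r Y i \<in> \<int>" using i rowY npos by simp
  qed
  have cint: "\<forall>j. fsum c Y j \<in> \<int>"
  proof
    fix j :: "'s \<times> 'u" obtain s u where j: "j = (s,u)" by (cases j)
    obtain k :: nat where "pSU $ (s,u) = real k / real n" using su_int by blast
    then show "fsum c Y j \<in> \<int>" using j colY npos by simp
  qed
  have hullY: "Y \<in> convex hull (Kset r c Y)" by (rule rounding[OF rint cint])
  define T where "T = {P \<in> types n. marg_ZS P = pZS \<and> marg_SU P = pSU \<and>
        dist_inf P (Pstar pZS pSU) \<le> 1 / real n}"
  have img: "(\<lambda>X. (1 / real n) *\<^sub>R X) ` Kset r c Y \<subseteq> T"
  proof
    fix P assume "P \<in> (\<lambda>X. (1 / real n) *\<^sub>R X) ` Kset r c Y"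
    then obtain X where X: "X \<in> Kset r c Y" and P: "P = (1 / real n) *\<^sub>R X" by auto
    have Xint: "X$e \<in> \<int>" for e using X unfolding Kset_def mem_Collect_eq by blast
    have Xr: "fsum r X i = fsum r Y i" for i using X unfolding Kset_def mem_Collect_eq by blast
    have Xc: "fsum c X j = fsum c Y j" for j using X unfolding Kset_def mem_Collect_eq by blast
    have Xb: "of_int \<lfloor>Y$e\<rfloor> \<le> X$e \<and> X$e \<le> of_int \<lceil>Y$e\<rceil>" for e using X unfolding Kset_def mem_Collect_eq by blast
    have Ynn: "Y$e \<ge> 0" for e using Ps_nn npos by (simp add: Y_def)
    have Xnn: "X$e \<ge> 0" for e
    proof -
      have "(0::int) \<le> \<lfloor>Y$e\<rfloor>" using Ynn[of e] by simp
      then show ?thesis using Xb[of e] by linarith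
    qed
    have Pe: "P$e = X$e / real n" for e by (simp add: P)
    have Pint: "\<exists>k::nat. P $ e = real k / real n" for e
    proof -
      obtain m where m: "X$e = of_int m" using Xint[of e] by (auto elim: Ints_cases)
      then have "m \<ge> 0" using Xnn[of e] by simp
      then have "X$e = real (nat m)" using m by simp
      then have "P $ e = real (nat m) / real n" using Pe by simp
      then show ?thesis by blast
    qed
    have rowPX: "(\<Sum>u\<in>UNIV. P $ (z,s,u)) = pZS $ (z,s)" for z :: 'z and s :: 's
    proof -
      have "(\<Sum>u\<in>UNIV. X $ (z,s,u)) = fsum r X (z,s)" unfolding fsum_def r_def sum_fiber_ZS ..
      also have "\<dots> = real n * pZS $ (z,s)" using Xr rowY by simp
      finally show ?thesis using npos by (simp add: Pe sum_divide_distrib[symmetric])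
    qed
    have colPX: "(\<Sum>z\<in>UNIV. P $ (z,s,u)) = pSU $ (s,u)" for s :: 's and u :: 'u
    proof -
      have "(\<Sum>z\<in>UNIV. X $ (z,s,u)) = fsum c X (s,u)" unfolding fsum_def c_def sum_fiber_SU ..
      also have "\<dots> = real n * pSU $ (s,u)" using Xc colY by simp
      finally show ?thesis using npos by (simp add: Pe sum_divide_distrib[symmetric])
    qed
    have "(\<Sum>e\<in>UNIV. P $ e) = (\<Sum>i\<in>UNIV. fsum r P i)" by (simp add: fsum_total)
    also have "\<dots> = (\<Sum>i\<in>UNIV. pZS $ i)"
    proof (rule sum.cong)
      fix i :: "'z \<times> 's" obtain z s where i: "i = (z,s)" by (cases i)
      show "fsum r P i = pZS $ i" unfolding i fsum_def r_def sum_fiber_ZS using rowPX by simp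
    qed simp
    finally have Psum: "(\<Sum>e\<in>UNIV. P $ e) = 1" using zs_sum by simp
    have Ptype: "P \<in> types n"
      unfolding types_def is_pmf_def using Psum Pint Xnn npos by (simp add: Pe)
    have mZS: "marg_ZS P = pZS"
      by (simp add: marg_ZS_def vec_eq_iff rowPX split: prod.split)
    have mSU: "marg_SU P = pSU"
      by (simp add: marg_SU_def vec_eq_iff colPX split: prod.split)
    have dd: "\<bar>P $ e - Ps $ e\<bar> \<le> 1 / real n" for e
    proof -
      have "\<bar>X$e - Y$e\<bar> \<le> 1"
        using Xb[of e] floor_correct[of "Y$e"] ceiling_correct[of "Y$e"] by (simp add: abs_le_iff) linarith
      moreover have "P $ e - Ps $ e = (X$e - Y$e) / real n" using npos by (simp add: Pe Y_def field_simps)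
      ultimately show ?thesis using npos by (simp add: abs_div divide_right_mono)
    qed
    have "dist_inf P Ps \<le> 1 / real n"
      unfolding dist_inf_def using dd by (subst Max_le_iff) auto
    then show "P \<in> T" using Ptype mZS mSU by (simp add: T_def Ps_def)
  qed
  have "Ps = (1 / real n) *\<^sub>R Y" using npos by (simp add: Y_def)
  then have "Ps \<in> (\<lambda>X. (1 / real n) *\<^sub>R X) ` (convex hull Kset r c Y)" using hullY by blast
  also have "\<dots> = convex hull ((\<lambda>X. (1 / real n) *\<^sub>R X) ` Kset r c Y)" by (simp add: convex_hull_scaling)
  also have "\<dots> \<subseteq> convex hull T" by (rule hull_mono[OF img])
  finally show ?thesis by (simp add: T_def Ps_def)
qed

end
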